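(* Let $P\subseteq\mathbb{R}^n$ be a grounded polytope. For every top face $F$ of $P$ put \[ P(F)=\mathrm{Sh}(F)+(h(F)-h(P))\cdot *Z. \] Then $\bigcup_{F\text{ top face of }P}\mathcal{F}(P(F))$ is a partition of $P$. If $P$ is integral (vertices in $\mathbb{Z}^n$), all polytopes in this partition are integral.
   Context: Let $\mathbf{z}=(0,\dots,0,1)$, $Z=\mathrm{hull}\{0,\mathbf{z}\}$, $*Z=\mathrm{hull}\{0,-\mathbf{z}\}$. $h(S)=\min\{x_n:x\in S\}$; $c_t(x_1,\dots,x_n)=(x_1,\dots,x_{n-1},t)$; $\mathrm{Sh}(Q)=\mathrm{hull}(Q\cup c_{h(Q)}(Q))$. A face of a polytope $Q$ is $\{q\in Q:\phi(q)=\max_Q\phi\}$ for linear $\phi$; $\mathcal{F}(Q)$ is the set of faces including $Q$. For an $n$-dimensional polytope, a codimension-1 face $F_\phi(P)$ is a bottom/vertical/top face according as $\phi(\mathbf{z})<0,=0,>0$. An $n$-dimensional polytope is grounded if it has exactly one bottom face and this face lies in a translate of $\mathbf{z}^\perp$. A partition of $P$ is a finite set $\mathcal{Q}$ of polytopes with $\bigcup\mathcal{Q}=P$, closed under taking faces, and such that any two members with nonempty intersection intersect in a common face of both. *)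

theory Defs
  imports "HOL-Analysis.Analysis"
begin

text \<open>Points of R^n are vectors of type real^'n; the distinguished index d plays the
role of the last coordinate x_n (the vertical direction z = e_d).\<close>

definition zvec :: "'n::finite \<Rightarrow> real^'n" where
  "zvec d = axis d 1"

definition starZ :: "'n::finite \<Rightarrow> (real^'n) set" where
  "starZ d = convex hull {0, - zvec d}"

definition hgt :: "'n::finite \<Rightarrow> (real^'n) set \<Rightarrow> real" where
  "hgt d S = Inf ((\<lambda>x. x $ d) ` S)"

definition cproj :: "'n::finite \<Rightarrow> real \<Rightarrow> real^'n \<Rightarrow> real^'n" where
  "cproj d t x = (\<chi> i. if i = d then t else x $ i)"

definition Sh :: "'n::finite \<Rightarrow> (real^'n) set \<Rightarrow> (real^'n) set" where
  "Sh d Q = convex hull (Q \<union> cproj d (hgt d Q) ` Q)"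

definition face_by :: "real^'n \<Rightarrow> (real^'n) set \<Rightarrow> (real^'n) set" where
  "face_by c Q = {q \<in> Q. \<forall>y\<in>Q. c \<bullet> y \<le> c \<bullet> q}"

definition faces :: "(real^'n) set \<Rightarrow> (real^'n) set set" where
  "faces Q = {F. \<exists>c. F = face_by c Q}"

definition top_face :: "'n::finite \<Rightarrow> (real^'n) set \<Rightarrow> (real^'n) set \<Rightarrow> bool" where
  "top_face d P F \<longleftrightarrow> aff_dim F = int CARD('n) - 1 \<and>
     (\<exists>c. F = face_by c P \<and> c \<bullet> zvec d > 0)"

definition bottom_face :: "'n::finite \<Rightarrow> (real^'n) set \<Rightarrow> (real^'n) set \<Rightarrow> bool" where
  "bottom_face d P F \<longleftrightarrow> aff_dim F = int CARD('n) - 1 \<and>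
     (\<exists>c. F = face_by c P \<and> c \<bullet> zvec d < 0)"

definition grounded :: "'n::finite \<Rightarrow> (real^'n) set \<Rightarrow> bool" where
  "grounded d P \<longleftrightarrow> polytope P \<and> aff_dim P = int CARD('n) \<and>
     (\<exists>!B. bottom_face d P B) \<and>
     (\<forall>B. bottom_face d P B \<longrightarrow> (\<exists>t. \<forall>x\<in>B. x $ d = t))"

definition PF :: "'n::finite \<Rightarrow> (real^'n) set \<Rightarrow> (real^'n) set \<Rightarrow> (real^'n) set" where
  "PF d P F = {a + b | a b. a \<in> Sh d F \<and>
                 b \<in> (\<lambda>y. (hgt d F - hgt d P) *\<^sub>R y) ` starZ d}"

definition is_partition :: "(real^'n) set set \<Rightarrow> (real^'n) set \<Rightarrow> bool" where
  "is_partition \<Q> P \<longleftrightarrow> finite \<Q> \<and> (\<forall>Q\<in>\<Q>. polytope Q) \<and> \<Union>\<Q> = P \<and>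
     (\<forall>Q\<in>\<Q>. faces Q \<subseteq> \<Q>) \<and>
     (\<forall>Q1\<in>\<Q>. \<forall>Q2\<in>\<Q>. Q1 \<inter> Q2 \<noteq> {} \<longrightarrow>
        Q1 \<inter> Q2 \<in> faces Q1 \<and> Q1 \<inter> Q2 \<in> faces Q2)"

definition integral_polytope :: "(real^'n) set \<Rightarrow> bool" where
  "integral_polytope Q \<longleftrightarrow> polytope Q \<and>
     (\<forall>v. v extreme_point_of Q \<longrightarrow> (\<forall>i. v $ i \<in> \<int>))"

end

theory Submission
  imports Defs
begin


lemma face_by_subset: "face_by c Q \<subseteq> Q"
  by (auto simp: face_by_def)

lemma face_by_nonempty:
  assumes "compact Q" "Q \<noteq> {}" shows "face_by c Q \<noteq> {}"
proof -
  have "continuous_on Q (\<lambda>x. c \<bullet> x)" by (intro continuous_intros)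
  then obtain q where "q \<in> Q" "\<forall>y\<in>Q. c \<bullet> y \<le> c \<bullet> q"
    using continuous_attains_sup[OF assms] by blast
  then show ?thesis by (auto simp: face_by_def)
qed

lemma face_by_face_of:
  assumes "convex Q" shows "face_by c Q face_of Q"
proof (cases "face_by c Q = {}")
  case True then show ?thesis by simp
next
  case False
  then obtain q where q: "q \<in> face_by c Q" by blast
  then have "face_by c Q = Q \<inter> {x. c \<bullet> x = c \<bullet> q}"
    by (auto simp: face_by_def) (metis order.eq_iff)+
  moreover have "\<And>x. x \<in> Q \<Longrightarrow> c \<bullet> x \<le> c \<bullet> q" using q by (auto simp: face_by_def)
  ultimately show ?thesis
    using face_of_Int_supporting_hyperplane_le[OF assms] by metis
qed

lemma exposed_face_by:
  assumes "Q \<subseteq> {x. a \<bullet> x \<le> b}" "T = Q \<inter> {x. a \<bullet> x = b}" "T \<noteq> {}"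
  shows "T = face_by a Q"
  using assms unfolding face_by_def
  apply auto
  by (smt (verit, ccfv_SIG) mem_Collect_eq subsetD)

lemma face_of_in_faces:
  assumes "polytope Q" "T face_of Q" "T \<noteq> {}"
  shows "T \<in> faces Q"
proof -
  have "T exposed_face_of Q"
    using exposed_face_of_polyhedron[OF polytope_imp_polyhedron[OF assms(1)]] assms(2) by blast
  then obtain a b where "Q \<subseteq> {x. a \<bullet> x \<le> b}" "T = Q \<inter> {x. a \<bullet> x = b}"
    by (auto simp: exposed_face_of_def)
  then have "T = face_by a Q" using exposed_face_by assms(3) by blast
  then show ?thesis by (auto simp: faces_def)
qed

lemma faces_polytope:
  assumes "polytope Q" "Q \<noteq> {}"
  shows "faces Q = {T. T face_of Q \<and> T \<noteq> {}}"
proof -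
  have "compact Q" "convex Q" using assms polytope_imp_compact polytope_imp_convex by auto
  show ?thesis
  proof
    show "faces Q \<subseteq> {T. T face_of Q \<and> T \<noteq> {}}"
      using face_by_nonempty[OF \<open>compact Q\<close> assms(2)] face_by_face_of[OF \<open>convex Q\<close>]
      by (auto simp: faces_def)
    show "{T. T face_of Q \<and> T \<noteq> {}} \<subseteq> faces Q"
      using face_of_in_faces[OF assms(1)] by blast
  qed
qed

lemma self_in_faces: "Q \<in> faces Q"
  unfolding faces_def face_by_def by (rule CollectI, rule exI[of _ 0]) simp




lemma zvec_inner[simp]: "zvec d \<bullet> x = x $ d"
  by (simp add: zvec_def inner_axis')

lemma zvec_comp[simp]: "zvec d $ i = (if i = d then 1 else 0)"
  by (simp add: zvec_def axis_def)

locale grd =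
  fixes d :: "'n::finite" and P :: "(real^'n) set"
  assumes gr: "grounded d P"
begin

abbreviation "z \<equiv> zvec d"
abbreviation "hP \<equiv> hgt d P"

lemma polyP: "polytope P" and dimP: "aff_dim P = int CARD('n)"
  using gr by (auto simp: grounded_def)

lemma compactP: "compact P" and convexP: "convex P"
  using polyP polytope_imp_compact polytope_imp_convex by auto

lemma nonemptyP: "P \<noteq> {}"
  using dimP by auto

lemma hP_le: "x \<in> P \<Longrightarrow> hP \<le> x $ d"
proof -
  assume x: "x \<in> P"
  have "compact ((\<lambda>x. x $ d) ` P)"
    by (rule compact_continuous_image[OF _ compactP]) (intro continuous_intros)
  then have "bdd_below ((\<lambda>x. x $ d) ` P)"
    by (simp add: bounded_imp_bdd_below compact_imp_bounded)
  then show ?thesis using x by (auto simp: hgt_def intro: cInf_lower)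
qed

lemma facets_ex:
  "\<exists>(H :: (real^'n) set set) a b. finite H \<and> P = {x. \<forall>h\<in>H. a h \<bullet> x \<le> b h} \<and>
    (\<forall>h\<in>H. a h \<noteq> 0 \<and> (P \<inter> {x. a h \<bullet> x = b h}) facet_of P)"
proof -
  have "\<exists>F. finite F \<and> P = (affine hull P) \<inter> \<Inter>F \<and>
              (\<forall>h \<in> F. \<exists>a b. a \<noteq> 0 \<and> h = {x. a \<bullet> x \<le> b}) \<and>
              (\<forall>F'. F' \<subset> F \<longrightarrow> P \<subset> (affine hull P) \<inter> \<Inter>F')"
    using polyhedron_Int_affine_minimal polytope_imp_polyhedron[OF polyP] by (rule iffD1)
  then obtain F where FF: "finite F \<and> P = (affine hull P) \<inter> \<Inter>F \<and>
              (\<forall>h \<in> F. \<exists>a b. a \<noteq> 0 \<and> h = {x. a \<bullet> x \<le> b}) \<and>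
              (\<forall>F'. F' \<subset> F \<longrightarrow> P \<subset> (affine hull P) \<inter> \<Inter>F')" by (rule exE)
  have "finite F" and seq: "P = affine hull P \<inter> \<Inter>F"
      and faces: "\<forall>h \<in> F. \<exists>a b. a \<noteq> 0 \<and> h = {x. a \<bullet> x \<le> b}"
      and min: "\<And>F'. F' \<subset> F \<Longrightarrow> P \<subset> (affine hull P) \<inter> \<Inter>F'"
    using FF by auto
  then obtain a where a0: "\<forall>h\<in>F. \<exists>b. a h \<noteq> 0 \<and> h = {x. a h \<bullet> x \<le> b}"
    using bchoice[OF faces] by auto
  from bchoice[OF a0] obtain b where ab0: "\<forall>h\<in>F. a h \<noteq> 0 \<and> h = {x. a h \<bullet> x \<le> b h}"
    by blast
  have ab: "\<And>h. h \<in> F \<Longrightarrow> a h \<noteq> 0 \<and> h = {x. a h \<bullet> x \<le> b h}"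
    using ab0 by auto
  have aff: "affine hull P = UNIV"
    by (rule affine_hull_UNIV) (simp add: dimP)
  have P1: "P = \<Inter>F" using seq aff by (metis inf_top_left)
  have PF: "P = {x. \<forall>h\<in>F. a h \<bullet> x \<le> b h}"
  proof (rule set_eqI)
    fix x show "x \<in> P \<longleftrightarrow> x \<in> {x. \<forall>h\<in>F. a h \<bullet> x \<le> b h}"
      unfolding P1 using ab by auto
  qed
  have fc: "\<And>h. h \<in> F \<Longrightarrow> a h \<noteq> 0 \<and> (P \<inter> {x. a h \<bullet> x = b h}) facet_of P"
    using facet_of_polyhedron_explicit[OF \<open>finite F\<close> seq ab min] ab by auto
  show ?thesis using \<open>finite F\<close> PF fc by blast
qed

end



lemma hyper_vertical:
  fixes a :: "real^'n::finite"
  assumes a: "a \<noteq> 0" and CH: "C \<subseteq> {x. a \<bullet> x = b}" and dim: "aff_dim C = int CARD('n) - 1"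
    and hor: "\<forall>x\<in>C. x $ d = t0" and az: "a \<bullet> zvec d \<noteq> 0"
  shows "a \<bullet> x - b = (a \<bullet> zvec d) * (x $ d - t0)"
proof -
  have "CARD('n) \<ge> 1" by (simp add: Suc_leI)
  then have "C \<noteq> {}" using dim by auto
  have eq: "affine hull C = {x. a \<bullet> x = b}"
  proof (rule affine_dim_equal)
    show "affine (affine hull C)" by simp
    show "affine {x. a \<bullet> x = b}" by (rule affine_hyperplane)
    show "affine hull C \<noteq> {}" using \<open>C \<noteq> {}\<close> by simp
    show "affine hull C \<subseteq> {x. a \<bullet> x = b}"
      using CH by (intro hull_minimal) (auto intro: affine_hyperplane)
    show "aff_dim (affine hull C) = aff_dim {x. a \<bullet> x = b}"
      using dim a by (simp add: aff_dim_hyperplane)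
  qed
  have sub: "affine hull C \<subseteq> {x. zvec d \<bullet> x = t0}"
    using hor affine_hyperplane[of "zvec d" t0] by (intro hull_minimal) auto
  define x' where "x' = x - ((a \<bullet> x - b) / (a \<bullet> zvec d)) *\<^sub>R zvec d"
  have "a \<bullet> x' = b" using az by (simp add: x'_def inner_diff_right)
  then have "x' $ d = t0" using eq sub by auto
  then have "x $ d - (a \<bullet> x - b) / (a \<bullet> zvec d) = t0" by (simp add: x'_def)
  then show ?thesis using az by (simp add: field_simps)
qed

context grd begin

lemma down:
  assumes x: "x \<in> P" and t: "0 \<le> t" "t \<le> x $ d - hP"
  shows "x - t *\<^sub>R z \<in> P"
proof -
  from facets_ex obtain H a b where fin: "finite (H :: (real^'n) set set)" and PH: "P = {x. \<forall>h\<in>H. a h \<bullet> x \<le> b h}"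
    and fc0: "\<forall>h\<in>H. a h \<noteq> 0 \<and> (P \<inter> {x. a h \<bullet> x = b h}) facet_of P"
    by blast
  have fc: "\<And>h. h \<in> H \<Longrightarrow> a h \<noteq> 0 \<and> (P \<inter> {x. a h \<bullet> x = b h}) facet_of P"
    using fc0 by blast
  have "a h \<bullet> (x - t *\<^sub>R z) \<le> b h" if h: "h \<in> H" for h
  proof (cases "a h \<bullet> z \<ge> 0")
    case True
    have "a h \<bullet> x \<le> b h" using x h PH by auto
    moreover have "t * (a h \<bullet> z) \<ge> 0" using True t by simp
    ultimately show ?thesis by (simp add: inner_diff_right)
  next
    case False
    define C where "C = P \<inter> {x. a h \<bullet> x = b h}"
    have fac: "C facet_of P" and a0: "a h \<noteq> 0" using fc h C_def by auto
    have Cne: "C \<noteq> {}" using fac by (simp add: facet_of_def)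
    have Ple: "P \<subseteq> {x. a h \<bullet> x \<le> b h}" using PH h by auto
    have Cf: "C = face_by (a h) P" using exposed_face_by[OF Ple C_def Cne] .
    have dimC: "aff_dim C = int CARD('n) - 1" using fac dimP by (simp add: facet_of_def)
    have bf: "bottom_face d P C"
      unfolding bottom_face_def using dimC Cf False by auto
    have "\<exists>t. \<forall>x\<in>C. x $ d = t" using gr bf unfolding grounded_def by blast
    then obtain t0 where t0: "\<forall>y\<in>C. y $ d = t0" by blast
    have hv: "\<And>y. a h \<bullet> y - b h = (a h \<bullet> z) * (y $ d - t0)"
      by (rule hyper_vertical[OF a0 _ dimC t0]) (use C_def False in auto)
    have ge: "t0 \<le> p $ d" if "p \<in> P" for p
    proof -
      have "a h \<bullet> p - b h \<le> 0" using Ple that by auto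
      then have "(a h \<bullet> z) * (p $ d - t0) \<le> 0" using hv by simp
      then show ?thesis using False by (simp add: mult_le_0_iff)
    qed
    have "t0 \<le> hP" unfolding hgt_def
      using nonemptyP ge by (intro cInf_greatest) auto
    then have "(a h \<bullet> z) * ((x - t *\<^sub>R z) $ d - t0) \<le> 0"
      using False t by (intro mult_nonpos_nonneg) auto
    then show ?thesis using hv[of "x - t *\<^sub>R z"] by simp
  qed
  then show ?thesis using PH by auto
qed

lemma up:
  assumes x: "x \<in> P"
  shows "\<exists>F y t. top_face d P F \<and> y \<in> F \<and> 0 \<le> t \<and> x = y - t *\<^sub>R z"
proof -
  from facets_ex obtain H a b where fin: "finite (H :: (real^'n) set set)" and PH: "P = {x. \<forall>h\<in>H. a h \<bullet> x \<le> b h}"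
    and fc0: "\<forall>h\<in>H. a h \<noteq> 0 \<and> (P \<inter> {x. a h \<bullet> x = b h}) facet_of P"
    by blast
  define L where "L = P \<inter> {y. y - (y $ d) *\<^sub>R z = x - (x $ d) *\<^sub>R z}"
  have "closed {y. y - (y $ d) *\<^sub>R z = x - (x $ d) *\<^sub>R z}"
    by (intro closed_Collect_eq continuous_intros)
  then have cL: "compact L" unfolding L_def using compactP by (rule compact_Int_closed[rotated])
  have xL: "x \<in> L" using x by (simp add: L_def)
  have "continuous_on L (\<lambda>y. y $ d)" by (intro continuous_intros)
  then obtain x' where x'L: "x' \<in> L" and mx: "\<forall>y\<in>L. y $ d \<le> x' $ d"
    using continuous_attains_sup[OF cL] xL by blast
  have x'P: "x' \<in> P" using x'L by (simp add: L_def)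
  have "\<exists>h\<in>H. a h \<bullet> x' = b h \<and> a h \<bullet> z > 0"
  proof (rule ccontr)
    assume na: "\<not> ?thesis"
    define df where "df h = (if a h \<bullet> z \<le> 0 then 1 else (b h - a h \<bullet> x') / (a h \<bullet> z))" for h
    have le: "a h \<bullet> x' \<le> b h" if "h \<in> H" for h using x'P PH that by auto
    have pos: "df h > 0" if h: "h \<in> H" for h
    proof (cases "a h \<bullet> z \<le> 0")
      case True then show ?thesis by (simp add: df_def)
    next
      case False
      then have "a h \<bullet> x' \<noteq> b h" using na h by auto
      then have "a h \<bullet> x' < b h" using le[OF h] by simp
      then show ?thesis using False by (simp add: df_def)
    qed
    define M where "M = Min (insert 1 (df ` H))"
    have finM: "finite (insert 1 (df ` H))" using fin by simp
    have Mpos: "M > 0" unfolding M_def using finM pos by (subst Min_gr_iff) auto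
    have Mle: "M \<le> df h" if "h \<in> H" for h unfolding M_def using finM that by (intro Min_le) auto
    define e where "e = M / 2"
    have epos: "e > 0" using Mpos by (simp add: e_def)
    have elt: "e < df h" if "h \<in> H" for h using Mpos Mle[OF that] by (simp add: e_def)
    define x'' where "x'' = x' + e *\<^sub>R z"
    have "a h \<bullet> x'' \<le> b h" if h: "h \<in> H" for h
    proof (cases "a h \<bullet> z \<le> 0")
      case True
      then have "e * (a h \<bullet> z) \<le> 0" using epos by (simp add: mult_nonneg_nonpos)
      then show ?thesis using le[OF h] by (simp add: x''_def inner_add_right)
    next
      case False
      then have "e < (b h - a h \<bullet> x') / (a h \<bullet> z)" using elt[OF h] by (simp add: df_def)
      then have "e * (a h \<bullet> z) < b h - a h \<bullet> x'" using False by (simp add: pos_less_divide_eq)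
      then show ?thesis by (simp add: x''_def inner_add_right)
    qed
    then have "x'' \<in> P" using PH by auto
    moreover have "x'' - (x'' $ d) *\<^sub>R z = x' - (x' $ d) *\<^sub>R z"
      by (simp add: x''_def algebra_simps)
    ultimately have "x'' \<in> L" using x'L by (simp add: L_def)
    then have "x'' $ d \<le> x' $ d" using mx by blast
    then show False using epos by (simp add: x''_def)
  qed
  then obtain h where h: "h \<in> H" and hx': "a h \<bullet> x' = b h" and hz: "a h \<bullet> z > 0" by blast
  define F where "F = P \<inter> {y. a h \<bullet> y = b h}"
  have fac: "F facet_of P" using fc0 h F_def by auto
  have x'F: "x' \<in> F" using x'P hx' by (simp add: F_def)
  have Ple: "P \<subseteq> {y. a h \<bullet> y \<le> b h}" using PH h by auto
  have Ff: "F = face_by (a h) P" using exposed_face_by[OF Ple F_def] x'F by blast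
  have dimF: "aff_dim F = int CARD('n) - 1" using fac dimP by (simp add: facet_of_def)
  have top: "top_face d P F" unfolding top_face_def using dimF Ff hz by auto
  have "x $ d \<le> x' $ d" using mx xL by blast
  moreover have "x = x' - (x' $ d - x $ d) *\<^sub>R z"
  proof -
    have "x' - (x' $ d) *\<^sub>R z = x - (x $ d) *\<^sub>R z" using x'L by (simp add: L_def)
    then show ?thesis by (simp add: algebra_simps)
  qed
  ultimately show ?thesis using top x'F by (intro exI[of _ F] exI[of _ x'] exI[of _ "x' $ d - x $ d"]) auto
qed

end



definition col :: "'n::finite \<Rightarrow> real \<Rightarrow> (real^'n) set \<Rightarrow> (real^'n) set" where
  "col d h F = {y - t *\<^sub>R zvec d | y t. y \<in> F \<and> 0 \<le> t \<and> t \<le> y $ d - h}"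

lemma col_convex:
  fixes F :: "(real^'n::finite) set"
  assumes "convex F" shows "convex (col d h F)"
  unfolding convex_def
proof (intro ballI allI impI)
  fix p q :: "real^'n" and u v :: real
  assume p: "p \<in> col d h F" and q: "q \<in> col d h F" and uv: "0 \<le> u" "0 \<le> v" "u + v = 1"
  obtain y1 t1 where 1: "p = y1 - t1 *\<^sub>R zvec d" "y1 \<in> F" "0 \<le> t1" "t1 \<le> y1 $ d - h"
    using p by (auto simp: col_def)
  obtain y2 t2 where 2: "q = y2 - t2 *\<^sub>R zvec d" "y2 \<in> F" "0 \<le> t2" "t2 \<le> y2 $ d - h"
    using q by (auto simp: col_def)
  have y: "u *\<^sub>R y1 + v *\<^sub>R y2 \<in> F" using assms 1 2 uv by (simp add: convex_def)
  have eq: "u *\<^sub>R p + v *\<^sub>R q = (u *\<^sub>R y1 + v *\<^sub>R y2) - (u * t1 + v * t2) *\<^sub>R zvec d"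
    unfolding 1(1) 2(1) by (simp add: algebra_simps)
  have a: "u * t1 \<le> u * (y1 $ d - h)" using 1 uv by (intro mult_left_mono) auto
  have b: "v * t2 \<le> v * (y2 $ d - h)" using 2 uv by (intro mult_left_mono) auto
  have "u * t1 + v * t2 \<le> (u *\<^sub>R y1 + v *\<^sub>R y2) $ d - h"
  proof -
    have e: "(u *\<^sub>R y1 + v *\<^sub>R y2) $ d - h = u * (y1 $ d - h) + v * (y2 $ d - h) + (u + v - 1) * h"
      by (simp add: algebra_simps)
    show ?thesis unfolding e using a b uv(3) by simp
  qed
  moreover have "0 \<le> u * t1 + v * t2" using 1 2 uv by simp
  ultimately show "u *\<^sub>R p + v *\<^sub>R q \<in> col d h F"
    unfolding col_def eq using y by blast
qed

lemma cproj_eq: "cproj d t y = y - (y $ d - t) *\<^sub>R zvec d"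
  by (simp add: cproj_def vec_eq_iff)

lemma starZ_eq: "starZ d = {- (u *\<^sub>R zvec d) | u. 0 \<le> u \<and> u \<le> 1}"
  unfolding starZ_def segment_convex_hull[symmetric]
  by (auto simp: in_segment)

lemma sh_col:
  assumes cF: "convex F" and hF: "\<forall>y\<in>F. hgt d F \<le> y $ d" and hp: "hp \<le> hgt d F"
  shows "{a + b | a b. a \<in> Sh d F \<and> b \<in> (\<lambda>y. (hgt d F - hp) *\<^sub>R y) ` starZ d} = col d hp F"
    (is "?L = _")
proof
  let ?h = "hgt d F"
  let ?z = "zvec d"
  have ShC: "Sh d F \<subseteq> col d ?h F"
    unfolding Sh_def
  proof (rule hull_minimal)
    show "convex (col d ?h F)" by (rule col_convex[OF cF])
    show "F \<union> cproj d ?h ` F \<subseteq> col d ?h F"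
    proof
      fix p assume "p \<in> F \<union> cproj d ?h ` F"
      then show "p \<in> col d ?h F"
      proof
        assume "p \<in> F" then show ?thesis using hF
          unfolding col_def by (intro CollectI exI[of _ p] exI[of _ 0]) auto
      next
        assume "p \<in> cproj d ?h ` F"
        then obtain y where y: "y \<in> F" "p = cproj d ?h y" by blast
        then show ?thesis using hF unfolding col_def cproj_eq
          by (intro CollectI exI[of _ y] exI[of _ "y $ d - ?h"]) auto
      qed
    qed
  qed
  show "?L \<subseteq> col d hp F"
  proof
    fix p assume "p \<in> ?L"
    then obtain a b where p: "p = a + b" and a: "a \<in> Sh d F" and b: "b \<in> (\<lambda>y. (?h - hp) *\<^sub>R y) ` starZ d"
      by blast
    obtain y t where a': "a = y - t *\<^sub>R ?z" "y \<in> F" "0 \<le> t" "t \<le> y $ d - ?h"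
      using ShC a by (auto simp: col_def)
    obtain u where u: "0 \<le> u" "u \<le> 1" "b = - ((?h - hp) * u) *\<^sub>R ?z"
      using b by (auto simp: starZ_eq)
    have "(?h - hp) * u \<le> ?h - hp" using u hp by (simp add: mult_left_le)
    moreover have "0 \<le> (?h - hp) * u" using u hp by simp
    moreover have "p = y - (t + (?h - hp) * u) *\<^sub>R ?z" using p a' u by (simp add: algebra_simps)
    ultimately show "p \<in> col d hp F" using a' unfolding col_def
      by (intro CollectI exI[of _ y] exI[of _ "t + (?h - hp) * u"]) auto
  qed
  show "col d hp F \<subseteq> ?L"
  proof
    fix p assume "p \<in> col d hp F"
    then obtain y t where p: "p = y - t *\<^sub>R ?z" "y \<in> F" "0 \<le> t" "t \<le> y $ d - hp"
      by (auto simp: col_def)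
    have hull2: "closed_segment y (cproj d ?h y) \<subseteq> Sh d F"
      unfolding Sh_def segment_convex_hull using p(2) by (intro hull_mono) auto
    have z0: "0 \<in> (\<lambda>y. (?h - hp) *\<^sub>R y) ` starZ d"
      unfolding starZ_eq by (rule image_eqI[of _ _ 0]) auto
    show "p \<in> ?L"
    proof (cases "t \<le> y $ d - ?h")
      case True
      have "p \<in> closed_segment y (cproj d ?h y)"
      proof (cases "y $ d - ?h = 0")
        case True
        then show ?thesis using \<open>t \<le> y $ d - ?h\<close> p by simp
      next
        case False
        then have pos: "y $ d - ?h > 0" using hF p(2) by force
        show ?thesis unfolding in_segment cproj_eq
        proof (intro exI[of _ "t / (y $ d - ?h)"] conjI)
          show "0 \<le> t / (y $ d - ?h)" using p pos by simp
          show "t / (y $ d - ?h) \<le> 1" using True pos by simp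
          show "p = (1 - t / (y $ d - ?h)) *\<^sub>R y + (t / (y $ d - ?h)) *\<^sub>R (y - (y $ d - ?h) *\<^sub>R ?z)"
          proof -
            have e1: "\<And>u k. (1 - u) *\<^sub>R y + u *\<^sub>R (y - k *\<^sub>R ?z) = y - (u * k) *\<^sub>R ?z"
              by (simp add: algebra_simps)
            have "t / (y $ d - ?h) * (y $ d - ?h) = t" using pos by simp
            then show ?thesis using p(1) e1 by simp
          qed
        qed
      qed
      then have "p \<in> Sh d F" using hull2 by blast
      then show ?thesis using z0 by force
    next
      case False
      define r where "r = t - (y $ d - ?h)"
      have r: "0 < r" "r \<le> ?h - hp" using False p by (auto simp: r_def)
      have a: "cproj d ?h y \<in> Sh d F" using hull2 by auto
      have b: "- (r *\<^sub>R ?z) \<in> (\<lambda>y. (?h - hp) *\<^sub>R y) ` starZ d"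
        unfolding starZ_eq
      proof (rule image_eqI[of _ _ "- ((r / (?h - hp)) *\<^sub>R ?z)"])
        show "- (r *\<^sub>R ?z) = (?h - hp) *\<^sub>R - ((r / (?h - hp)) *\<^sub>R ?z)" using r by simp
        show "- ((r / (?h - hp)) *\<^sub>R ?z) \<in> {- (u *\<^sub>R ?z) |u. 0 \<le> u \<and> u \<le> 1}"
          using r by auto
      qed
      have "p = cproj d ?h y + - (r *\<^sub>R ?z)" using p(1) by (simp add: cproj_eq r_def algebra_simps)
      then show ?thesis using a b by blast
    qed
  qed
qed




lemma seg_col:
  assumes "0 \<le> t" "t \<le> y $ d - h"
  shows "y - t *\<^sub>R zvec d \<in> closed_segment y (cproj d h y)"
proof (cases "y $ d - h = 0")
  case True then show ?thesis using assms by simp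
next
  case False
  then have pos: "y $ d - h > 0" using assms by simp
  show ?thesis unfolding in_segment cproj_eq
  proof (intro exI[of _ "t / (y $ d - h)"] conjI)
    show "0 \<le> t / (y $ d - h)" using assms pos by simp
    show "t / (y $ d - h) \<le> 1" using assms pos by simp
    have e1: "\<And>u k. (1 - u) *\<^sub>R y + u *\<^sub>R (y - k *\<^sub>R zvec d) = y - (u * k) *\<^sub>R zvec d"
      by (simp add: algebra_simps)
    have "t / (y $ d - h) * (y $ d - h) = t" using pos by simp
    then show "y - t *\<^sub>R zvec d = (1 - t / (y $ d - h)) *\<^sub>R y + (t / (y $ d - h)) *\<^sub>R (y - (y $ d - h) *\<^sub>R zvec d)"
      using e1 by simp
  qed
qed

lemma cproj_affine:
  assumes "u + v = 1"
  shows "cproj d h (u *\<^sub>R x + v *\<^sub>R y) = u *\<^sub>R cproj d h x + v *\<^sub>R cproj d h y"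
proof -
  have "h = u * h + v * h" using assms by (simp add: distrib_right[symmetric])
  then show ?thesis by (simp add: cproj_def vec_eq_iff)
qed

lemma cproj_hull:
  "cproj d h ` (convex hull V) \<subseteq> convex hull (cproj d h ` V)"
proof -
  have "convex {x. cproj d h x \<in> convex hull (cproj d h ` V)}"
  proof (rule convexI)
    fix x y and u v :: real
    assume x: "x \<in> {x. cproj d h x \<in> convex hull (cproj d h ` V)}"
      and y: "y \<in> {x. cproj d h x \<in> convex hull (cproj d h ` V)}"
      and uv: "0 \<le> u" "0 \<le> v" "u + v = 1"
    have "u *\<^sub>R cproj d h x + v *\<^sub>R cproj d h y \<in> convex hull (cproj d h ` V)"
      using x y uv by (intro convexD[OF convex_convex_hull]) auto
    then show "u *\<^sub>R x + v *\<^sub>R y \<in> {x. cproj d h x \<in> convex hull (cproj d h ` V)}"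
      using cproj_affine[OF uv(3), of d h x y] by simp
  qed
  moreover have "V \<subseteq> {x. cproj d h x \<in> convex hull (cproj d h ` V)}"
    by (auto intro: hull_inc)
  ultimately have "convex hull V \<subseteq> {x. cproj d h x \<in> convex hull (cproj d h ` V)}"
    by (rule hull_minimal[rotated])
  then show ?thesis by blast
qed

lemma col_hull:
  fixes V :: "(real^'n::finite) set"
  assumes F: "F = convex hull V" and hF: "\<forall>y\<in>F. h \<le> y $ d"
  shows "col d h F = convex hull (V \<union> cproj d h ` V)"
proof
  show "convex hull (V \<union> cproj d h ` V) \<subseteq> col d h F"
  proof (rule hull_minimal)
    show "convex (col d h F)" unfolding F by (rule col_convex[OF convex_convex_hull])
    show "V \<union> cproj d h ` V \<subseteq> col d h F"
    proof
      fix p assume "p \<in> V \<union> cproj d h ` V"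
      then show "p \<in> col d h F"
      proof
        assume "p \<in> V"
        then have "p \<in> F" unfolding F by (rule hull_inc)
        then show ?thesis using hF
          unfolding col_def by (intro CollectI exI[of _ p] exI[of _ 0]) auto
      next
        assume "p \<in> cproj d h ` V"
        then obtain y where y: "y \<in> V" "p = cproj d h y" by blast
        then have "y \<in> F" unfolding F by (intro hull_inc)
        then show ?thesis using hF y unfolding col_def cproj_eq
          by (intro CollectI exI[of _ y] exI[of _ "y $ d - h"]) auto
      qed
    qed
  qed
  show "col d h F \<subseteq> convex hull (V \<union> cproj d h ` V)"
  proof
    fix p assume "p \<in> col d h F"
    then obtain y t where p: "p = y - t *\<^sub>R zvec d" "y \<in> F" "0 \<le> t" "t \<le> y $ d - h"
      by (auto simp: col_def)
    have s1: "convex hull V \<subseteq> convex hull (V \<union> cproj d h ` V)" by (rule hull_mono) blast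
    have s2: "convex hull (cproj d h ` V) \<subseteq> convex hull (V \<union> cproj d h ` V)" by (rule hull_mono) blast
    have yV: "y \<in> convex hull V" using p(2) F by simp
    have "y \<in> convex hull (V \<union> cproj d h ` V)" using s1 yV by (rule subsetD)
    moreover have "cproj d h y \<in> convex hull (cproj d h ` V)"
      using cproj_hull[of d h V] yV by (rule subsetD[OF _ imageI])
    then have "cproj d h y \<in> convex hull (V \<union> cproj d h ` V)" using s2 by (rule rev_subsetD)
    ultimately have "closed_segment y (cproj d h y) \<subseteq> convex hull (V \<union> cproj d h ` V)"
      by (simp add: closed_segment_subset)
    then show "p \<in> convex hull (V \<union> cproj d h ` V)" using seg_col[OF p(3,4)] p(1) by blast
  qed
qed

lemma col_polytope:
  fixes F :: "(real^'n::finite) set"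
  assumes "polytope F" "\<forall>y\<in>F. h \<le> y $ d"
  shows "polytope (col d h F)"
proof -
  obtain V where V: "finite V" "F = convex hull V" using assms(1) by (auto simp: polytope_def)
  have "col d h F = convex hull (V \<union> cproj d h ` V)" by (rule col_hull[OF V(2) assms(2)])
  moreover have "finite (V \<union> cproj d h ` V)" using V(1) by simp
  ultimately show ?thesis unfolding polytope_def by blast
qed

context grd begin

lemma top_props:
  assumes "top_face d P F"
  shows "F face_of P" "F \<noteq> {}" "F \<subseteq> P" "convex F" "compact F" "polytope F"
proof -
  obtain c where c: "F = face_by c P" using assms by (auto simp: top_face_def)
  show fo: "F face_of P" using c face_by_face_of convexP by simp
  have "aff_dim F = int CARD('n) - 1" using assms by (simp add: top_face_def)
  moreover have "CARD('n) \<ge> 1" by (simp add: Suc_leI)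
  ultimately show "F \<noteq> {}" by auto
  show "F \<subseteq> P" using fo face_of_imp_subset by blast
  show "polytope F" using fo polyP face_of_polytope_polytope by blast
  then show "convex F" "compact F" using polytope_imp_convex polytope_imp_compact by auto
qed

lemma hgt_le:
  assumes "compact S" "y \<in> S" shows "hgt d S \<le> y $ d"
proof -
  have "compact ((\<lambda>x. x $ d) ` S)"
    by (rule compact_continuous_image[OF _ assms(1)]) (intro continuous_intros)
  then have "bdd_below ((\<lambda>x. x $ d) ` S)"
    by (simp add: bounded_imp_bdd_below compact_imp_bounded)
  then show ?thesis using assms by (auto simp: hgt_def intro: cInf_lower)
qed

lemma hP_le_hF:
  assumes "top_face d P F" shows "hP \<le> hgt d F"
  unfolding hgt_def[of d F] using top_props[OF assms] hP_le
  by (intro cInf_greatest) auto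

lemma PF_col:
  assumes "top_face d P F" shows "PF d P F = col d hP F"
  unfolding PF_def
  by (rule sh_col) (use top_props[OF assms] hgt_le hP_le_hF[OF assms] in auto)

lemma col_sub:
  assumes "F \<subseteq> P" shows "col d hP F \<subseteq> P"
  using assms down by (auto simp: col_def)

lemma col_poly:
  assumes "top_face d P F" shows "polytope (col d hP F)"
  using top_props[OF assms] hP_le by (intro col_polytope) auto

lemma col_ne:
  assumes "top_face d P F" shows "col d hP F \<noteq> {}"
proof -
  obtain y where "y \<in> F" using top_props(2)[OF assms] by blast
  then have "y \<in> col d hP F" using top_props(3)[OF assms] hP_le
    unfolding col_def by (intro CollectI exI[of _ y] exI[of _ 0]) auto
  then show ?thesis by blast
qed

lemma col_inter_face:
  assumes t1: "top_face d P F1" and t2: "top_face d P F2"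
  shows "col d hP F1 \<inter> col d hP F2 face_of col d hP F1"
proof -
  obtain c1 where c1: "F1 = face_by c1 P" "c1 \<bullet> z > 0" using t1 by (auto simp: top_face_def)
  obtain c2 where c2: "F2 = face_by c2 P" "c2 \<bullet> z > 0" using t2 by (auto simp: top_face_def)
  obtain q1 where q1: "q1 \<in> F1" using top_props(2)[OF t1] by blast
  obtain q2 where q2: "q2 \<in> F2" using top_props(2)[OF t2] by blast
  define b1 where "b1 = c1 \<bullet> q1"
  define b2 where "b2 = c2 \<bullet> q2"
  have le1: "\<And>p. p \<in> P \<Longrightarrow> c1 \<bullet> p \<le> b1" using q1 c1 by (auto simp: face_by_def b1_def)
  have le2: "\<And>p. p \<in> P \<Longrightarrow> c2 \<bullet> p \<le> b2" using q2 c2 by (auto simp: face_by_def b2_def)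
  have eq1: "c1 \<bullet> y = b1" if yF: "y \<in> F1" for y
  proof -
    have A: "y \<in> P" "\<forall>p\<in>P. c1 \<bullet> p \<le> c1 \<bullet> y" using yF c1(1) by (auto simp: face_by_def)
    have B: "q1 \<in> P" "\<forall>p\<in>P. c1 \<bullet> p \<le> c1 \<bullet> q1" using q1 c1(1) by (auto simp: face_by_def)
    have "c1 \<bullet> y \<le> c1 \<bullet> q1" using B(2) A(1) by blast
    moreover have "c1 \<bullet> q1 \<le> c1 \<bullet> y" using A(2) B(1) by blast
    ultimately show ?thesis unfolding b1_def by linarith
  qed
  have eq2: "c2 \<bullet> y = b2" if yF: "y \<in> F2" for y
  proof -
    have A: "y \<in> P" "\<forall>p\<in>P. c2 \<bullet> p \<le> c2 \<bullet> y" using yF c2(1) by (auto simp: face_by_def)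
    have B: "q2 \<in> P" "\<forall>p\<in>P. c2 \<bullet> p \<le> c2 \<bullet> q2" using q2 c2(1) by (auto simp: face_by_def)
    have "c2 \<bullet> y \<le> c2 \<bullet> q2" using B(2) A(1) by blast
    moreover have "c2 \<bullet> q2 \<le> c2 \<bullet> y" using A(2) B(1) by blast
    ultimately show ?thesis unfolding b2_def by linarith
  qed
  have in2: "\<And>y. y \<in> P \<Longrightarrow> c2 \<bullet> y = b2 \<Longrightarrow> y \<in> F2"
    using le2 c2 by (auto simp: face_by_def)
  have sub1: "F1 \<subseteq> P" and sub2: "F2 \<subseteq> P" using top_props t1 t2 by auto
  define w where "w = (1 / (c2 \<bullet> z)) *\<^sub>R c2 - (1 / (c1 \<bullet> z)) *\<^sub>R c1"
  define K where "K = b2 / (c2 \<bullet> z) - b1 / (c1 \<bullet> z)"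
  have wgen: "w \<bullet> (y - t *\<^sub>R z) = (c2 \<bullet> y) / (c2 \<bullet> z) - (c1 \<bullet> y) / (c1 \<bullet> z)" for y t
  proof -
    have "w \<bullet> (y - t *\<^sub>R z) = (c2 \<bullet> y - t * (c2 \<bullet> z)) / (c2 \<bullet> z) - (c1 \<bullet> y - t * (c1 \<bullet> z)) / (c1 \<bullet> z)"
      using c1(2) c2(2) by (simp add: w_def inner_diff_left inner_diff_right diff_divide_distrib)
    also have "\<dots> = (c2 \<bullet> y) / (c2 \<bullet> z) - (c1 \<bullet> y) / (c1 \<bullet> z)"
      using c1(2) c2(2) by (simp add: diff_divide_distrib)
    finally show ?thesis .
  qed
  have w1: "w \<bullet> p = (c2 \<bullet> y) / (c2 \<bullet> z) - b1 / (c1 \<bullet> z)" if "p = y - t *\<^sub>R z" "y \<in> F1" for p y t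
    using wgen eq1 that by simp
  have w2: "w \<bullet> p = b2 / (c2 \<bullet> z) - (c1 \<bullet> y) / (c1 \<bullet> z)" if "p = y - t *\<^sub>R z" "y \<in> F2" for p y t
    using wgen eq2 that by simp
  have leK: "w \<bullet> p \<le> K" if pc: "p \<in> col d hP F1" for p
  proof -
    obtain y t where p: "p = y - t *\<^sub>R z" "y \<in> F1" using pc by (auto simp: col_def)
    have "c2 \<bullet> y \<le> b2" using le2 sub1 p by auto
    then have "(c2 \<bullet> y) / (c2 \<bullet> z) \<le> b2 / (c2 \<bullet> z)" using c2(2) by (simp add: divide_right_mono)
    then show ?thesis using w1[OF p] by (simp add: K_def)
  qed
  have geK: "w \<bullet> p \<ge> K" if pc: "p \<in> col d hP F2" for p
  proof -
    obtain y t where p: "p = y - t *\<^sub>R z" "y \<in> F2" using pc by (auto simp: col_def)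
    have "c1 \<bullet> y \<le> b1" using le1 sub2 p by auto
    then have "(c1 \<bullet> y) / (c1 \<bullet> z) \<le> b1 / (c1 \<bullet> z)" using c1(2) by (simp add: divide_right_mono)
    then show ?thesis using w2[OF p] by (simp add: K_def)
  qed
  have "col d hP F1 \<inter> col d hP F2 = col d hP F1 \<inter> {x. w \<bullet> x = K}"
  proof
    show "col d hP F1 \<inter> col d hP F2 \<subseteq> col d hP F1 \<inter> {x. w \<bullet> x = K}"
    proof
      fix p assume p: "p \<in> col d hP F1 \<inter> col d hP F2"
      then have "w \<bullet> p \<le> K" "K \<le> w \<bullet> p" using leK geK by auto
      then show "p \<in> col d hP F1 \<inter> {x. w \<bullet> x = K}" using p by simp
    qed
    show "col d hP F1 \<inter> {x. w \<bullet> x = K} \<subseteq> col d hP F1 \<inter> col d hP F2"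
    proof
      fix p assume p: "p \<in> col d hP F1 \<inter> {x. w \<bullet> x = K}"
      then obtain y t where yt: "p = y - t *\<^sub>R z" "y \<in> F1" "0 \<le> t" "t \<le> y $ d - hP"
        by (auto simp: col_def)
      have "(c2 \<bullet> y) / (c2 \<bullet> z) = b2 / (c2 \<bullet> z)" using p w1[OF yt(1,2)] by (simp add: K_def)
      then have "c2 \<bullet> y = b2" using c2(2) by simp
      then have "y \<in> F2" using in2 sub1 yt(2) by auto
      then have "p \<in> col d hP F2" using yt unfolding col_def by blast
      then show "p \<in> col d hP F1 \<inter> col d hP F2" using p by blast
    qed
  qed
  moreover have "col d hP F1 \<inter> {x. w \<bullet> x = K} face_of col d hP F1"
    by (rule face_of_Int_supporting_hyperplane_le[OF col_convex[OF top_props(4)[OF t1]]]) (use leK in auto)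
  ultimately show ?thesis by simp
qed

end



context grd begin

lemma hP_int:
  assumes ip: "integral_polytope P" shows "hP \<in> \<int>"
proof -
  define Q0 where "Q0 = face_by (- z) P"
  have fo: "Q0 face_of P" unfolding Q0_def by (rule face_by_face_of[OF convexP])
  have ne: "Q0 \<noteq> {}" unfolding Q0_def by (rule face_by_nonempty[OF compactP nonemptyP])
  have pQ: "polytope Q0" using fo polyP face_of_polytope_polytope by blast
  obtain q where q: "q extreme_point_of Q0"
    using extreme_point_exists_convex[OF polytope_imp_compact[OF pQ] polytope_imp_convex[OF pQ] ne] by blast
  have qP: "q extreme_point_of P" and qQ: "q \<in> Q0" using q extreme_point_of_face[OF fo] by auto
  have qint: "q $ d \<in> \<int>" using ip qP by (simp add: integral_polytope_def)
  have qmin: "\<forall>p\<in>P. q $ d \<le> p $ d" and qinP: "q \<in> P" using qQ by (auto simp: Q0_def face_by_def)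
  have "hP = q $ d" unfolding hgt_def
    by (rule cInf_eq_minimum) (use qmin qinP in auto)
  then show ?thesis using qint by simp
qed

lemma ext_subset:
  assumes "v extreme_point_of S" "v \<in> T" "T \<subseteq> S"
  shows "v extreme_point_of T"
  using assms by (auto simp: extreme_point_of_def)

lemma col_extreme:
  assumes t: "top_face d P F" and ip: "integral_polytope P"
    and v: "v extreme_point_of col d hP F"
  shows "v $ i \<in> \<int>"
proof -
  have vc: "v \<in> col d hP F" using v by (simp add: extreme_point_of_def)
  then obtain y t where yt: "v = y - t *\<^sub>R z" "y \<in> F" "0 \<le> t" "t \<le> y $ d - hP"
    by (auto simp: col_def)
  have FP: "F face_of P" and FsP: "F \<subseteq> P" using top_props[OF t] by auto
  have Fcol: "F \<subseteq> col d hP F"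
  proof
    fix p assume "p \<in> F"
    then show "p \<in> col d hP F" using FsP hP_le
      unfolding col_def by (intro CollectI exI[of _ p] exI[of _ 0]) auto
  qed
  have cpcol: "cproj d hP p \<in> col d hP F" if "p \<in> F" for p
    using that FsP hP_le unfolding col_def cproj_eq
    by (intro CollectI exI[of _ p] exI[of _ "p $ d - hP"]) auto
  have intP: "\<And>w j. w extreme_point_of F \<Longrightarrow> w $ j \<in> \<int>"
    using ip extreme_point_of_face[OF FP] by (auto simp: integral_polytope_def)
  consider "t = 0" | "t = y $ d - hP" | "0 < t \<and> t < y $ d - hP" using yt by linarith
  then show ?thesis
  proof cases
    case 1
    then have "v = y" using yt by simp
    then have "v extreme_point_of F" using ext_subset[OF v _ Fcol] yt(2) by simp
    then show ?thesis by (rule intP)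
  next
    case 2
    then have vy: "v = cproj d hP y" using yt by (simp add: cproj_eq)
    obtain c where c: "F = face_by c P" "c \<bullet> z > 0" using t by (auto simp: top_face_def)
    have ceq: "c \<bullet> a = c \<bullet> b" if "a \<in> F" "b \<in> F" for a b
      using that c(1) by (auto simp: face_by_def) (meson order.antisym)
    have "y extreme_point_of F"
      unfolding extreme_point_of_def
    proof (intro conjI ballI)
      show "y \<in> F" by (rule yt(2))
      fix a b assume a: "a \<in> F" and b: "b \<in> F"
      show "y \<notin> open_segment a b"
      proof
        assume "y \<in> open_segment a b"
        then obtain u where ab: "a \<noteq> b" "0 < u" "u < 1" "y = (1 - u) *\<^sub>R a + u *\<^sub>R b"
          by (auto simp: in_segment)
        have "cproj d hP a \<noteq> cproj d hP b"
        proof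
          assume eq: "cproj d hP a = cproj d hP b"
          have "a - b = (a $ d - b $ d) *\<^sub>R z"
            unfolding vec_eq_iff
          proof (intro allI)
            fix j show "(a - b) $ j = ((a $ d - b $ d) *\<^sub>R z) $ j"
            proof (cases "j = d")
              case False
              have "cproj d hP a $ j = cproj d hP b $ j" using eq by simp
              then show ?thesis using False by (simp add: cproj_def)
            qed simp
          qed
          then have "c \<bullet> (a - b) = (a $ d - b $ d) * (c \<bullet> z)" by simp
          moreover have "c \<bullet> (a - b) = 0" using ceq[OF a b] by (simp add: inner_diff_right)
          ultimately have "a $ d = b $ d" using c(2) by simp
          then have "a - b = 0" using \<open>a - b = _\<close> by simp
          then show False using ab(1) by simp
        qed
        moreover have "v = (1 - u) *\<^sub>R cproj d hP a + u *\<^sub>R cproj d hP b"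
          using vy ab(4) cproj_affine[of "1 - u" u d hP a b] by simp
        ultimately have "v \<in> open_segment (cproj d hP a) (cproj d hP b)"
          using ab by (auto simp: in_segment)
        then show False using v cpcol[OF a] cpcol[OF b] by (auto simp: extreme_point_of_def)
      qed
    qed
    then have "\<forall>j. y $ j \<in> \<int>" using intP by blast
    then show ?thesis using hP_int[OF ip] vy by (simp add: cproj_def)
  next
    case 3
    have "v \<in> closed_segment y (cproj d hP y)" using seg_col[OF yt(3,4)] yt(1) by simp
    moreover have "v \<noteq> y" using 3 yt(1) by (auto simp: vec_eq_iff)
    moreover have "v \<noteq> cproj d hP y"
    proof
      assume "v = cproj d hP y"
      then have "v $ d = hP" by (simp add: cproj_def)
      then show False using 3 yt(1) by simp
    qed
    ultimately have "v \<in> open_segment y (cproj d hP y)" by (simp add: open_segment_def)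
    then show ?thesis using v Fcol yt(2) cpcol[OF yt(2)] by (auto simp: extreme_point_of_def)
  qed
qed

end

theorem proposition3p11:
  fixes P :: "(real^'n) set" and d :: 'n
  assumes "grounded d P"
  shows "is_partition (\<Union>F\<in>{F. top_face d P F}. faces (PF d P F)) P \<and>
         (integral_polytope P \<longrightarrow>
            (\<forall>Q\<in>(\<Union>F\<in>{F. top_face d P F}. faces (PF d P F)). integral_polytope Q))"
proof -
  interpret grd d P using assms by unfold_locales
  let ?T = "{F. top_face d P F}"
  have eqQ: "(\<Union>F\<in>?T. faces (PF d P F)) = (\<Union>F\<in>?T. faces (col d hP F))"
    using PF_col by auto
  have fcol: "faces (col d hP F) = {T. T face_of col d hP F \<and> T \<noteq> {}}" if "top_face d P F" for F
    using faces_polytope[OF col_poly[OF that] col_ne[OF that]] .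
  have memQ: "Q face_of col d hP F" "Q \<noteq> {}" "polytope Q" "Q \<subseteq> P"
    if "top_face d P F" "Q \<in> faces (col d hP F)" for F Q
  proof -
    show fo: "Q face_of col d hP F" "Q \<noteq> {}" using fcol[OF that(1)] that(2) by auto
    show "polytope Q" using face_of_polytope_polytope[OF col_poly[OF that(1)] fo(1)] .
    show "Q \<subseteq> P" using face_of_imp_subset[OF fo(1)] col_sub top_props(3)[OF that(1)] by blast
  qed
  have part: "is_partition (\<Union>F\<in>?T. faces (col d hP F)) P"
    unfolding is_partition_def
  proof (intro conjI ballI)
    have "?T \<subseteq> {F. F face_of P}" using top_props by blast
    then have "finite ?T" using finite_polytope_faces[OF polyP] finite_subset by blast
    moreover have "finite (faces (col d hP F))" if "F \<in> ?T" for F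
      using fcol that finite_polytope_faces[OF col_poly, of F] by (auto intro: finite_subset)
    ultimately show "finite (\<Union>F\<in>?T. faces (col d hP F))" by blast
  next
    fix Q assume "Q \<in> (\<Union>F\<in>?T. faces (col d hP F))"
    then show "polytope Q" using memQ by blast
  next
    show "\<Union> (\<Union>F\<in>?T. faces (col d hP F)) = P"
    proof
      show "\<Union> (\<Union>F\<in>?T. faces (col d hP F)) \<subseteq> P" using memQ by blast
      show "P \<subseteq> \<Union> (\<Union>F\<in>?T. faces (col d hP F))"
      proof
        fix x assume x: "x \<in> P"
        then obtain F y t where Fyt: "top_face d P F" "y \<in> F" "0 \<le> t" "x = y - t *\<^sub>R z"
          using up by blast
        have "y \<in> P" using top_props(3)[OF Fyt(1)] Fyt(2) by blast
        have "x $ d = y $ d - t" using Fyt(4) by simp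
        then have "t \<le> y $ d - hP" using hP_le[OF x] by simp
        then have "x \<in> col d hP F" using Fyt unfolding col_def by blast
        moreover have "col d hP F \<in> faces (col d hP F)" by (rule self_in_faces)
        ultimately show "x \<in> \<Union> (\<Union>F\<in>?T. faces (col d hP F))" using Fyt(1) by blast
      qed
    qed
  next
    fix Q assume "Q \<in> (\<Union>F\<in>?T. faces (col d hP F))"
    then obtain F where F: "top_face d P F" "Q \<in> faces (col d hP F)" by blast
    have Q: "Q face_of col d hP F" "Q \<noteq> {}" "polytope Q" using memQ[OF F] by auto
    have "faces Q \<subseteq> faces (col d hP F)"
    proof
      fix G assume "G \<in> faces Q"
      then have G: "G face_of Q" "G \<noteq> {}" using faces_polytope[OF Q(3) Q(2)] by auto
      then have "G face_of col d hP F" using Q(1) face_of_trans by blast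
      then show "G \<in> faces (col d hP F)" using fcol[OF F(1)] G(2) by auto
    qed
    then show "faces Q \<subseteq> (\<Union>F\<in>?T. faces (col d hP F))" using F(1) by blast
  next
    fix Q1 Q2 assume Q1: "Q1 \<in> (\<Union>F\<in>?T. faces (col d hP F))" and Q2: "Q2 \<in> (\<Union>F\<in>?T. faces (col d hP F))"
    then obtain F1 F2 where F1: "top_face d P F1" "Q1 \<in> faces (col d hP F1)"
      and F2: "top_face d P F2" "Q2 \<in> faces (col d hP F2)" by blast
    have a: "col d hP F1 \<inter> col d hP F2 face_of col d hP F1" by (rule col_inter_face[OF F1(1) F2(1)])
    have b: "col d hP F1 \<inter> col d hP F2 face_of col d hP F2"
      using col_inter_face[OF F2(1) F1(1)] by (simp add: Int_commute)
    have fi: "Q1 \<inter> Q2 face_of Q1 \<and> Q1 \<inter> Q2 face_of Q2"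
      by (rule face_of_Int_subface[OF a b memQ(1)[OF F1] memQ(1)[OF F2]])
    show "Q1 \<inter> Q2 \<noteq> {} \<longrightarrow> Q1 \<inter> Q2 \<in> faces Q1 \<and> Q1 \<inter> Q2 \<in> faces Q2"
      using fi face_of_in_faces memQ(3)[OF F1] memQ(3)[OF F2] by blast
  qed
  have integ: "integral_polytope Q" if ip: "integral_polytope P" and Q: "Q \<in> (\<Union>F\<in>?T. faces (col d hP F))" for Q
  proof -
    obtain F where F: "top_face d P F" "Q \<in> faces (col d hP F)" using Q by blast
    have Qf: "Q face_of col d hP F" "polytope Q" using memQ[OF F] by auto
    show ?thesis unfolding integral_polytope_def
    proof (intro conjI allI impI)
      show "polytope Q" by (rule Qf(2))
      fix v i assume "v extreme_point_of Q"
      then have "v extreme_point_of col d hP F" using extreme_point_of_face[OF Qf(1)] by blast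
      then show "v $ i \<in> \<int>" by (rule col_extreme[OF F(1) ip])
    qed
  qed
  show ?thesis unfolding eqQ using part integ by blast
qed


end
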